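(* Let $\ell\in\mathbb N$ and let $\Gamma_2$ be a finite alphabet disjoint from $\Gamma_1=\{0,1,\mathsf{inc},\mathsf{dec}\}$. There is a pushdown automaton $A$ over $\Gamma_1\cup\Gamma_2$ with 3 states and a stack alphabet of two symbols such that the projection of $L(A)\cap L'_\ell$ onto the alphabet $\Gamma_2$ (erasing all letters of $\Gamma_1$) is exactly $(\Gamma_2)^{2^{2^\ell}}$.
   Context: A pushdown automaton has transitions labelled by a letter or $\epsilon$ and a stack operation (push a symbol, pop a symbol, or no operation); it accepts a word if there is a run from the initial state with empty stack reading the word and ending in a final state with empty stack. For a word $b_1\cdots b_\ell\in\{0,1\}^\ell$ let $\mathsf{val}(b_1\cdots b_\ell)=\sum_i b_i 2^{\ell-i}$. Interpret $\mathsf{inc}(n)=n+1$, $\mathsf{dec}(n)=n-1$ and $a(n)=n$ for $a\in\Gamma_2$. $L'_\ell$ is the set of words $n_0o_1n_1\cdots o_kn_k$ with $k\ge 0$, each $n_i\in\{0,1\}^\ell$, each $o_i\in\{\mathsf{inc},\mathsf{dec}\}\cup\Gamma_2$, such that $\mathsf{val}(n_i)=o_i(\mathsf{val}(n_{i-1}))$ for all $0<i\le k$, $n_0=0^\ell=n_k$, if $o_i=\mathsf{inc}$ then $n_{i-1}\ne 1^\ell$, and if $o_i=\mathsf{dec}$ then $n_{i-1}\ne 0^\ell$. *)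

theory Defs
  imports Main
begin

datatype 'g letter = Zero | One | Inc | Dec | G 'g

datatype 's stackop = Push 's | Pop 's | Nop

record ('q, 's, 'a) pda =
  states :: "'q set"
  stack_alph :: "'s set"
  delta :: "('q \<times> 'a option \<times> 's stackop \<times> 'q) set"
  init :: 'q
  final :: "'q set"

definition pda_wf :: "('q, 's, 'a) pda \<Rightarrow> bool" where
  "pda_wf A \<longleftrightarrow> finite (states A) \<and> finite (stack_alph A) \<and>
     init A \<in> states A \<and> final A \<subseteq> states A \<and>
     (\<forall>(q, a, op, q') \<in> delta A. q \<in> states A \<and> q' \<in> states A \<and>
        (\<forall>s. op = Push s \<longrightarrow> s \<in> stack_alph A) \<and>
        (\<forall>s. op = Pop s \<longrightarrow> s \<in> stack_alph A))"

text \<open>Effect of a stack operation (top of stack = head of list).\<close>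
fun apply_op :: "'s stackop \<Rightarrow> 's list \<Rightarrow> 's list option" where
  "apply_op (Push s) st = Some (s # st)"
| "apply_op (Pop s) [] = None"
| "apply_op (Pop s) (t # st) = (if t = s then Some st else None)"
| "apply_op Nop st = Some st"

inductive run :: "('q, 's, 'a) pda \<Rightarrow> 'q \<Rightarrow> 's list \<Rightarrow> 'a list \<Rightarrow> 'q \<Rightarrow> 's list \<Rightarrow> bool"
  for A where
  run_nil: "run A q st [] q st"
| run_letter: "\<lbrakk>(q, Some a, op, q') \<in> delta A; apply_op op st = Some st';
     run A q' st' w q'' st''\<rbrakk> \<Longrightarrow> run A q st (a # w) q'' st''"
| run_eps: "\<lbrakk>(q, None, op, q') \<in> delta A; apply_op op st = Some st';
     run A q' st' w q'' st''\<rbrakk> \<Longrightarrow> run A q st w q'' st''"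

definition lang :: "('q, 's, 'a) pda \<Rightarrow> 'a list set" where
  "lang A = {w. \<exists>qf \<in> final A. run A (init A) [] w qf []}"

definition bitword :: "nat \<Rightarrow> 'g letter list \<Rightarrow> bool" where
  "bitword l n \<longleftrightarrow> length n = l \<and> set n \<subseteq> {Zero, One}"

definition val :: "'g letter list \<Rightarrow> nat" where
  "val bs = (\<Sum>i<length bs. (if bs ! i = One then 1 else 0) * 2 ^ (length bs - 1 - i))"

definition is_op :: "'g letter \<Rightarrow> bool" where
  "is_op o' \<longleftrightarrow> o' = Inc \<or> o' = Dec \<or> (\<exists>g. o' = G g)"

fun op_val :: "'g letter \<Rightarrow> nat \<Rightarrow> nat" where
  "op_val Inc n = n + 1"
| "op_val Dec n = n - 1"
| "op_val _ n = n"

definition Lprime :: "nat \<Rightarrow> 'g letter list set" where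
  "Lprime l = {w. \<exists>(ns :: 'g letter list list) (os :: 'g letter list).
     length ns = Suc (length os) \<and>
     w = ns ! 0 @ concat (map (\<lambda>i. os ! i # ns ! Suc i) [0..<length os]) \<and>
     (\<forall>n \<in> set ns. bitword l n) \<and>
     ns ! 0 = replicate l Zero \<and> ns ! length os = replicate l Zero \<and>
     (\<forall>i < length os. is_op (os ! i) \<and>
        val (ns ! Suc i) = op_val (os ! i) (val (ns ! i)) \<and>
        (os ! i = Inc \<longrightarrow> ns ! i \<noteq> replicate l One) \<and>
        (os ! i = Dec \<longrightarrow> ns ! i \<noteq> replicate l Zero))}"

definition proj :: "'g letter list \<Rightarrow> 'g list" where
  "proj w = concat (map (\<lambda>c. case c of G g \<Rightarrow> [g] | _ \<Rightarrow> []) w)"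

end

theory Submission
  imports Defs
begin


lemma val_Nil[simp]: "val [] = 0" by (simp add: val_def)

lemma val_Cons: "val (x # xs) = (if x = One then 2 ^ length xs else 0) + val xs"
  unfolding val_def length_Cons sum.lessThan_Suc_shift by (simp del: sum.lessThan_Suc)

lemma val_bound: "length n = l \<Longrightarrow> val n \<le> 2 ^ l - 1"
proof (induction n arbitrary: l)
  case Nil then show ?case by simp
next
  case (Cons x xs)
  then have "val xs \<le> 2 ^ length xs - 1" by simp
  moreover have "(1::nat) \<le> 2 ^ length xs" by simp
  ultimately show ?case using Cons.prems by (auto simp: val_Cons)
qed

lemma val_ones: "val (replicate l One) = 2 ^ l - 1"
proof (induction l)
  case 0 then show ?case by simp
next
  case (Suc l)
  have "(1::nat) \<le> 2 ^ l" by simp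
  then show ?case using Suc by (simp add: val_Cons)
qed

lemma val_zeros: "val (replicate l Zero) = 0"
  by (induction l) (simp_all add: val_Cons)

lemma ones_val: "bitword l n \<Longrightarrow> set n \<subseteq> {One} \<Longrightarrow> val n = 2 ^ l - 1"
proof -
  assume "bitword l n" "set n \<subseteq> {One}"
  then have "n = replicate l One" unfolding bitword_def by (intro replicate_eqI) auto
  then show ?thesis by (simp add: val_ones)
qed

fun bin :: "nat \<Rightarrow> nat \<Rightarrow> 'g letter list" where
  "bin 0 v = []"
| "bin (Suc l) v = (if 2 ^ l \<le> v then One else Zero) # bin l (v mod 2 ^ l)"

lemma bin_len[simp]: "length (bin l v) = l"
  by (induction l arbitrary: v) auto

lemma bin_set: "set (bin l v) \<subseteq> {Zero, One}"
  by (induction l arbitrary: v) auto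

lemma bin_val: "v < 2 ^ l \<Longrightarrow> val (bin l v) = v"
proof (induction l arbitrary: v)
  case 0 then show ?case by simp
next
  case (Suc l)
  have m: "v mod 2 ^ l < 2 ^ l" by simp
  show ?case
  proof (cases "2 ^ l \<le> v")
    case True
    then have "v mod 2 ^ l = v - 2 ^ l" using Suc.prems by (simp add: le_mod_geq)
    then show ?thesis using True Suc.IH[OF m] by (simp add: val_Cons)
  next
    case False
    then show ?thesis using Suc.IH[OF m] by (simp add: val_Cons)
  qed
qed

lemma bin_zero: "bin l 0 = replicate l Zero"
  by (induction l) auto

lemma bin_max: "bin l (2 ^ l - 1) = replicate l One"
proof (induction l)
  case 0 then show ?case by simp
next
  case (Suc l)
  have p: "(1::nat) \<le> 2 ^ l" by simp
  have "2 ^ Suc l - 1 = 2 ^ l + (2 ^ l - (1::nat))" using p by simp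
  moreover have "(2 ^ l + (2 ^ l - 1)) mod 2 ^ l = (2 ^ l - 1) mod (2::nat) ^ l" by (rule mod_add_self1)
  moreover have "(2 ^ l - 1) mod 2 ^ l = 2 ^ l - (1::nat)" using p by (intro mod_less) simp
  ultimately have "(2 ^ Suc l - 1) mod 2 ^ l = 2 ^ l - (1::nat)" by simp
  then show ?case using Suc p by simp
qed

lemma proj_Nil[simp]: "proj [] = []" by (simp add: proj_def)
lemma proj_Cons: "proj (x # xs) = (case x of G g \<Rightarrow> [g] | _ \<Rightarrow> []) @ proj xs"
  by (simp add: proj_def)
lemma proj_app[simp]: "proj (xs @ ys) = proj xs @ proj ys" by (simp add: proj_def)
lemma proj_bits: "set xs \<subseteq> {Zero, One} \<Longrightarrow> proj xs = []"
  by (induction xs) (auto simp: proj_Cons)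

lemma run_app: "run A q st u q' st' \<Longrightarrow> run A q' st' v q'' st'' \<Longrightarrow> run A q st (u @ v) q'' st''"
  by (induction rule: run.induct) (auto intro: run.intros)

lemma run_split: "run A q st w q'' st'' \<Longrightarrow> w = u @ v \<Longrightarrow>
   \<exists>q' st'. run A q st u q' st' \<and> run A q' st' v q'' st''"
proof (induction arbitrary: u rule: run.induct)
  case (run_nil q st) then show ?case by (auto intro: run.intros)
next
  case (run_letter q a op q' st st' w q'' st'')
  show ?case
  proof (cases u)
    case Nil then show ?thesis using run_letter by (auto intro: run.intros)
  next
    case (Cons x u')
    then have "w = u' @ v" "x = a" using run_letter.prems by auto
    then obtain m sm where "run A q' st' u' m sm" "run A m sm v q'' st''" using run_letter.IH by blast
    then show ?thesis using run_letter.hyps Cons \<open>x = a\<close> by (auto intro: run.intros)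
  qed
next
  case (run_eps q op q' st st' w q'' st'')
  then obtain m sm where "run A q' st' u m sm" "run A m sm v q'' st''" by blast
  then show ?case using run_eps.hyps by (auto intro: run.intros)
qed

lemma run_cons_letter: "run A q st w q'' st'' \<Longrightarrow> w = a # v \<Longrightarrow>
  \<exists>q2 st2 op q3 st3. run A q st [] q2 st2 \<and> (q2, Some a, op, q3) \<in> delta A \<and>
     apply_op op st2 = Some st3 \<and> run A q3 st3 v q'' st''"
proof (induction arbitrary: a v rule: run.induct)
  case (run_nil q st) then show ?case by simp
next
  case (run_letter q a op q' st st' w q'' st'')
  then show ?case by (blast intro: run.run_nil)
next
  case (run_eps q op q' st st' w q'' st'')
  then obtain q2 st2 op2 q3 st3 where "run A q' st' [] q2 st2" "(q2, Some a, op2, q3) \<in> delta A"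
     "apply_op op2 st2 = Some st3" "run A q3 st3 v q'' st''" by blast
  then show ?case using run_eps.hyps by (meson run.run_eps)
qed



definition deltaA :: "(nat \<times> 'g letter option \<times> nat stackop \<times> nat) set" where
  "deltaA = {(0, Some One, Nop, 0), (0, None, Push 1, 1),
             (1, Some Zero, Nop, 1), (1, Some One, Nop, 1), (1, Some Inc, Push 0, 0),
             (2, Some Zero, Nop, 2), (2, Some One, Nop, 2), (2, None, Pop 1, 1),
             (2, Some Dec, Pop 0, 2)}
        \<union> range (\<lambda>g. (0, Some (G g), Push 1, 0)) \<union> range (\<lambda>g. (0, Some (G g), Pop 1, 2))"

definition Apda :: "(nat, nat, 'g letter) pda" where
  "Apda = \<lparr>states = {0,1,2}, stack_alph = {0,1}, delta = deltaA, init = 0, final = {2}\<rparr>"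

lemma Apda_simps[simp]: "states Apda = {0,1,2}" "stack_alph Apda = {0,1}" "delta Apda = deltaA"
  "init Apda = 0" "final Apda = {2}"
  by (simp_all add: Apda_def)

lemma Apda_wf: "pda_wf Apda"
  unfolding pda_wf_def by (auto simp: deltaA_def)

definition BitsRes :: "nat \<Rightarrow> nat list \<Rightarrow> 'g letter list \<Rightarrow> nat \<Rightarrow> nat list \<Rightarrow> bool" where
  "BitsRes q st w q1 st1 \<longleftrightarrow>
    (q = 0 \<and> ((q1 = 0 \<and> st1 = st \<and> set w \<subseteq> {One}) \<or> (q1 = 1 \<and> st1 = 1 # st))) \<or>
    (q = 1 \<and> q1 = 1 \<and> st1 = st) \<or>
    (q = 2 \<and> ((q1 = 2 \<and> st1 = st) \<or> (q1 = 1 \<and> st = 1 # st1)))"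

lemma bits_run: "run (Apda :: (nat, nat, 'g letter) pda) q st w q1 st1 \<Longrightarrow> set w \<subseteq> {Zero, One} \<Longrightarrow>
   q \<in> {0,1,2} \<Longrightarrow> BitsRes q st w q1 st1"
proof (induction rule: run.induct)
  case (run_nil q st) then show ?case by (auto simp: BitsRes_def)
next
  case (run_letter q a op q' st st' w q'' st'')
  then have "q' = q \<and> op = Nop \<and> (q = 0 \<longrightarrow> a = One)" by (auto simp: deltaA_def)
  then show ?case using run_letter by (auto simp: BitsRes_def)
next
  case (run_eps q op q' st st' w q'' st'')
  then have "(q = 0 \<and> op = Push 1 \<and> q' = 1) \<or> (q = 2 \<and> op = Pop 1 \<and> q' = 1)"
    by (auto simp: deltaA_def)
  then show ?case using run_eps
    by (auto simp: BitsRes_def split: if_splits elim: apply_op.elims)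
qed

lemma macro:
  assumes r: "run (Apda :: (nat, nat, 'g letter) pda) q st (n @ o' # rest) 2 []"
    and bits: "set n \<subseteq> {Zero, One}" and op: "o' \<noteq> Zero" "o' \<noteq> One" and q: "q = 0 \<or> q = 2"
  shows "\<exists>q' st'. run (Apda :: (nat, nat, 'g letter) pda) q' st' rest 2 [] \<and>
    ((q = 0 \<and> set n \<subseteq> {One} \<and> (\<exists>g. o' = G g) \<and> q' = 0 \<and> st' = 1 # st) \<or>
     (q = 0 \<and> set n \<subseteq> {One} \<and> (\<exists>g. o' = G g) \<and> q' = 2 \<and> st = 1 # st') \<or>
     (q = 0 \<and> o' = Inc \<and> q' = 0 \<and> st' = 0 # 1 # st) \<or>
     (q = 2 \<and> o' = Dec \<and> q' = 2 \<and> st = 0 # st') \<or>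
     (q = 2 \<and> o' = Inc \<and> q' = 0 \<and> (\<exists>s. st = 1 # s \<and> st' = 0 # s)))" (is "\<exists>q' st'. _ \<and> ?P q' st'")
proof -
  obtain q1 st1 where r1: "run Apda q st n q1 st1" and r2: "run Apda q1 st1 (o' # rest) 2 []"
    using run_split[OF r, of n "o' # rest"] by auto
  obtain q2 st2 opp q3 st3 where e: "run (Apda :: (nat, nat, 'g letter) pda) q1 st1 [] q2 st2" and d: "(q2, Some o', opp, q3) \<in> delta Apda"
    and ap: "apply_op opp st2 = Some st3" and r3: "run Apda q3 st3 rest 2 []"
    using run_cons_letter[OF r2, of o' rest] by blast
  have "run Apda q st n q2 st2" using run_app[OF r1 e] by simp
  then have br: "BitsRes q st n q2 st2" using bits_run bits q by fastforce
  have dd: "(q2 = 0 \<and> (\<exists>g. o' = G g) \<and> ((opp = Push 1 \<and> q3 = 0) \<or> (opp = Pop 1 \<and> q3 = 2))) \<or>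
      (q2 = 1 \<and> o' = Inc \<and> opp = Push 0 \<and> q3 = 0) \<or> (q2 = 2 \<and> o' = Dec \<and> opp = Pop 0 \<and> q3 = 2)"
    using d op by (auto simp: deltaA_def)
  show ?thesis
  proof (rule exI[of _ q3], rule exI[of _ st3], intro conjI[OF r3])
    from dd show "?P q3 st3"
    proof (elim disjE conjE exE)
      fix g assume h: "q2 = 0" "o' = G g" "opp = Push 1" "q3 = 0"
      then have "q = 0 \<and> st2 = st \<and> set n \<subseteq> {One}" using br by (auto simp: BitsRes_def)
      then show ?thesis using h ap by auto
    next
      fix g assume h: "q2 = 0" "o' = G g" "opp = Pop 1" "q3 = 2"
      then have "q = 0 \<and> st2 = st \<and> set n \<subseteq> {One}" using br by (auto simp: BitsRes_def)
      moreover have "st2 = 1 # st3" using ap h by (auto elim: apply_op.elims split: if_splits)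
      ultimately show ?thesis using h by auto
    next
      assume h: "q2 = 1" "o' = Inc" "opp = Push 0" "q3 = 0"
      then have st3: "st3 = 0 # st2" using ap by simp
      have "(q = 0 \<and> st2 = 1 # st) \<or> (q = 2 \<and> st = 1 # st2)" using br h q by (auto simp: BitsRes_def)
      then show ?thesis using h st3 by auto
    next
      assume h: "q2 = 2" "o' = Dec" "opp = Pop 0" "q3 = 2"
      then have "st2 = 0 # st3" using ap by (auto elim: apply_op.elims split: if_splits)
      moreover have "q = 2 \<and> st2 = st" using br h by (auto simp: BitsRes_def)
      ultimately show ?thesis using h by auto
    qed
  qed
qed

lemma final_bits: "run (Apda :: (nat, nat, 'g letter) pda) q st n 2 [] \<Longrightarrow> set n \<subseteq> {Zero, One} \<Longrightarrow>
   q = 0 \<or> q = 2 \<Longrightarrow> q = 2 \<and> st = []"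
  using bits_run[of q st n 2 "[]"] by (auto simp: BitsRes_def)



fun cnt :: "nat list \<Rightarrow> nat" where
  "cnt [] = 0"
| "cnt (x # xs) = (if x = 0 then Suc (cnt xs) else cnt xs)"

fun phi :: "nat \<Rightarrow> nat list \<Rightarrow> nat" where
  "phi N [] = 0"
| "phi N (x # xs) = (if x = 1 then 2 ^ (N - cnt xs) else 0) + phi N xs"

definition topok :: "nat list \<Rightarrow> bool" where
  "topok st \<longleftrightarrow> st = [] \<or> hd st = 0"

fun okst :: "nat \<Rightarrow> nat list \<Rightarrow> bool" where
  "okst N [] = True"
| "okst N (x # xs) = (if x = 0 then okst N xs else x = 1 \<and> cnt xs < N \<and> okst N xs \<and> topok xs)"

definition Good :: "nat \<Rightarrow> nat \<Rightarrow> nat list \<Rightarrow> nat \<Rightarrow> bool" where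
  "Good N q st v \<longleftrightarrow> (q = 0 \<and> topok st \<and> okst N st \<and> cnt st = v) \<or>
     (q = 0 \<and> (\<exists>s. st = 1 # s \<and> topok s \<and> okst N s \<and> cnt s = N) \<and> v = N) \<or>
     (q = 2 \<and> okst N st \<and> cnt st = v)"

definition Dead :: "nat \<Rightarrow> nat \<Rightarrow> nat list \<Rightarrow> nat \<Rightarrow> bool" where
  "Dead N q st v \<longleftrightarrow> v = N \<and> ((q = 0 \<and> (\<exists>s. st = 1 # 1 # s)) \<or> (q = 2 \<and> (\<exists>s. st = 1 # s)))"

definition Phi :: "nat \<Rightarrow> nat \<Rightarrow> nat list \<Rightarrow> nat \<Rightarrow> nat" where
  "Phi N q st v = (if q = 0 \<and> topok st then 2 ^ (N + 1 - v) + phi N st else phi N st)"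

lemma Good_not_Dead: "Good N q st v \<Longrightarrow> Dead N q st v \<Longrightarrow> False"
  unfolding Good_def Dead_def by (auto simp: topok_def)

lemma step_inv:
  fixes n :: "'g letter list"
  assumes inv: "Good N q st v \<or> Dead N q st v"
    and vN: "v' \<le> N"
    and vv: "v' = op_val o' v"
    and ones: "set n \<subseteq> {One} \<Longrightarrow> v = N"
    and cases:
    "((q = 0 \<and> set n \<subseteq> {One} \<and> (\<exists>g. o' = G g) \<and> q' = 0 \<and> st' = 1 # st) \<or>
     (q = 0 \<and> set n \<subseteq> {One} \<and> (\<exists>g. o' = G g) \<and> q' = 2 \<and> st = 1 # st') \<or>
     (q = 0 \<and> o' = Inc \<and> q' = 0 \<and> st' = 0 # 1 # st) \<or>
     (q = 2 \<and> o' = Dec \<and> q' = 2 \<and> st = 0 # st') \<or>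
     (q = 2 \<and> o' = Inc \<and> q' = 0 \<and> (\<exists>s. st = 1 # s \<and> st' = 0 # s)))"
  shows "(Good N q' st' v' \<or> Dead N q' st' v') \<and> (Dead N q st v \<longrightarrow> Dead N q' st' v') \<and>
     (Good N q st v \<longrightarrow> Good N q' st' v' \<longrightarrow>
        Phi N q st v = length (proj [o']) + Phi N q' st' v')"
  using cases
proof (elim disjE conjE exE)
  fix g assume h: "q = 0" "set n \<subseteq> {One}" "o' = G g" "q' = 0" "st' = 1 # st"
  then have v: "v = N" "v' = N" using ones vv by auto
  show ?thesis using inv h v
    by (auto simp: Good_def Dead_def Phi_def topok_def proj_Cons)
next
  fix g assume h: "q = 0" "set n \<subseteq> {One}" "o' = G g" "q' = 2" "st = 1 # st'"
  then have v: "v = N" "v' = N" using ones vv by auto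
  show ?thesis using inv h v
    by (auto simp: Good_def Dead_def Phi_def topok_def proj_Cons)
next
  assume h: "q = 0" "o' = Inc" "q' = 0" "st' = 0 # 1 # st"
  then have v: "v' = v + 1" "v < N" using vv vN by auto
  then have e: "(2::nat) ^ (N + 1 - v) = 2 ^ (N - v) + 2 ^ (N - v)"
    by (simp add: Suc_diff_le)
  show ?thesis using inv h v e
    by (auto simp: Good_def Dead_def Phi_def topok_def proj_Cons)
next
  assume h: "q = 2" "o' = Dec" "q' = 2" "st = 0 # st'"
  then have v: "v' = v - 1" using vv by auto
  show ?thesis using inv h v
    by (auto simp: Good_def Dead_def Phi_def topok_def proj_Cons)
next
  fix s assume h: "q = 2" "o' = Inc" "q' = 0" "st = 1 # s" "st' = 0 # s"
  then have v: "v' = v + 1" "v < N" using vv vN by auto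
  show ?thesis using inv h v
    by (auto simp: Good_def Dead_def Phi_def topok_def proj_Cons)
qed



lemma count_main:
  fixes ns :: "'g letter list list" and os :: "'g letter list"
  assumes lens: "length ns = Suc (length os)"
    and bw: "\<forall>n\<in>set ns. bitword l n"
    and cond: "\<forall>i<length os. is_op (os ! i) \<and> val (ns ! Suc i) = op_val (os ! i) (val (ns ! i))"
    and NN: "N = 2 ^ l - 1"
  shows "i \<le> length os \<Longrightarrow>
    run (Apda :: (nat, nat, 'g letter) pda) q st
       (ns ! i @ concat (map (\<lambda>j. os ! j # ns ! Suc j) [i..<length os])) 2 [] \<Longrightarrow>
    Good N q st (val (ns ! i)) \<or> Dead N q st (val (ns ! i)) \<Longrightarrow>
    Good N q st (val (ns ! i)) \<and>
    length (proj (ns ! i @ concat (map (\<lambda>j. os ! j # ns ! Suc j) [i..<length os]))) =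
      Phi N q st (val (ns ! i))"
proof (induction i arbitrary: q st rule: inc_induct)
  case base
  have bwk: "bitword l (ns ! length os)" using bw lens by simp
  then have bits: "set (ns ! length os) \<subseteq> {Zero, One}" by (simp add: bitword_def)
  have q: "q = 0 \<or> q = 2" using base.prems(2) by (auto simp: Good_def Dead_def)
  have "q = 2 \<and> st = []" using final_bits[of q st "ns ! length os"] base.prems(1) bits q by simp
  then show ?case using base.prems(2) bits
    by (auto simp: Good_def Dead_def Phi_def proj_bits)
next
  case (step i)
  let ?f = "\<lambda>j. os ! j # ns ! Suc j"
  let ?rest = "ns ! Suc i @ concat (map ?f [Suc i..<length os])"
  have w: "ns ! i @ concat (map ?f [i..<length os]) = ns ! i @ os ! i # ?rest"
    using step.hyps(2) by (simp add: upt_conv_Cons)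
  have bwi: "bitword l (ns ! i)" using bw lens step.hyps(2) by simp
  have bwi': "bitword l (ns ! Suc i)" using bw lens step.hyps(2) by simp
  have bits: "set (ns ! i) \<subseteq> {Zero, One}" using bwi by (simp add: bitword_def)
  have isop: "is_op (os ! i)" and vv: "val (ns ! Suc i) = op_val (os ! i) (val (ns ! i))"
    using cond step.hyps(2) by auto
  have op: "os ! i \<noteq> Zero" "os ! i \<noteq> One" using isop by (auto simp: is_op_def)
  have q: "q = 0 \<or> q = 2" using step.prems(2) by (auto simp: Good_def Dead_def)
  obtain q' st' where r': "run (Apda :: (nat, nat, 'g letter) pda) q' st' ?rest 2 []" and
    cs: "((q = 0 \<and> set (ns ! i) \<subseteq> {One} \<and> (\<exists>g. os ! i = G g) \<and> q' = 0 \<and> st' = 1 # st) \<or>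
     (q = 0 \<and> set (ns ! i) \<subseteq> {One} \<and> (\<exists>g. os ! i = G g) \<and> q' = 2 \<and> st = 1 # st') \<or>
     (q = 0 \<and> os ! i = Inc \<and> q' = 0 \<and> st' = 0 # 1 # st) \<or>
     (q = 2 \<and> os ! i = Dec \<and> q' = 2 \<and> st = 0 # st') \<or>
     (q = 2 \<and> os ! i = Inc \<and> q' = 0 \<and> (\<exists>s. st = 1 # s \<and> st' = 0 # s)))"
    using macro[OF step.prems(1)[unfolded w] bits op q] by blast
  have vN: "val (ns ! Suc i) \<le> N" using val_bound bwi' NN by (auto simp: bitword_def)
  have ones: "set (ns ! i) \<subseteq> {One} \<Longrightarrow> val (ns ! i) = N" using ones_val bwi NN by auto
  have key: "(Good N q' st' (val (ns ! Suc i)) \<or> Dead N q' st' (val (ns ! Suc i))) \<and>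
     (Dead N q st (val (ns ! i)) \<longrightarrow> Dead N q' st' (val (ns ! Suc i))) \<and>
     (Good N q st (val (ns ! i)) \<longrightarrow> Good N q' st' (val (ns ! Suc i)) \<longrightarrow>
        Phi N q st (val (ns ! i)) = length (proj [os ! i]) + Phi N q' st' (val (ns ! Suc i)))"
    by (rule step_inv[OF step.prems(2) vN vv ones cs])
  have IH: "Good N q' st' (val (ns ! Suc i)) \<and>
     length (proj ?rest) = Phi N q' st' (val (ns ! Suc i))"
    using step.IH[OF r'] key by blast
  have G: "Good N q st (val (ns ! i))"
    using key IH step.prems(2) Good_not_Dead by blast
  have "length (proj (ns ! i @ os ! i # ?rest)) = length (proj [os ! i]) + length (proj ?rest)"
    using proj_bits[OF bits] by (simp add: proj_Cons)
  then show ?case using w G key IH by simp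
qed



definition flat :: "('g letter \<times> 'g letter list) list \<Rightarrow> 'g letter list" where
  "flat ps = concat (map (\<lambda>(o', n). o' # n) ps)"

lemma flat_simps[simp]: "flat [] = []" "flat ((o', n) # ps) = o' # n @ flat ps"
  "flat (ps @ qs) = flat ps @ flat qs"
  by (simp_all add: flat_def)

fun vp :: "nat \<Rightarrow> nat \<Rightarrow> ('g letter \<times> 'g letter list) list \<Rightarrow> nat \<Rightarrow> bool" where
  "vp l v [] v' = (v = v')"
| "vp l v ((o', n) # ps) v' = (bitword l n \<and> is_op o' \<and> val n = op_val o' v \<and>
     (o' = Inc \<longrightarrow> v \<noteq> 2 ^ l - 1) \<and> (o' = Dec \<longrightarrow> v \<noteq> 0) \<and> vp l (val n) ps v')"

lemma vp_app: "vp l v ps v' \<Longrightarrow> vp l v' qs v'' \<Longrightarrow> vp l v (ps @ qs) v''"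
  by (induction ps arbitrary: v rule: list.induct) auto

lemma zeros_val: "bitword l n \<Longrightarrow> val n = 0 \<Longrightarrow> n = replicate l Zero"
proof (induction n arbitrary: l)
  case Nil then show ?case by (simp add: bitword_def)
next
  case (Cons x xs)
  then have "x = Zero" "val xs = 0" "bitword (l - 1) xs" "l = Suc (length xs)"
    by (auto simp: val_Cons bitword_def split: if_splits)
  then show ?case using Cons.IH by simp
qed

lemma map_idx: "map (\<lambda>i. f (xs ! i)) [0..<length xs] = map f xs"
  by (rule nth_equalityI) auto

lemma vp_props:
  "vp l (val n0) ps v' \<Longrightarrow> bitword l n0 \<Longrightarrow>
   (\<forall>n\<in>set (n0 # map snd ps). bitword l n) \<and>
   (\<forall>i<length ps. is_op (map fst ps ! i) \<and>
      val ((n0 # map snd ps) ! Suc i) = op_val (map fst ps ! i) (val ((n0 # map snd ps) ! i)) \<and>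
      (map fst ps ! i = Inc \<longrightarrow> (n0 # map snd ps) ! i \<noteq> replicate l One) \<and>
      (map fst ps ! i = Dec \<longrightarrow> (n0 # map snd ps) ! i \<noteq> replicate l Zero)) \<and>
   val (last (n0 # map snd ps)) = v'"
proof (induction ps arbitrary: n0)
  case Nil then show ?case by simp
next
  case (Cons p ps)
  obtain o' n where p: "p = (o', n)" by force
  have h: "bitword l n" "is_op o'" "val n = op_val o' (val n0)"
     "o' = Inc \<longrightarrow> val n0 \<noteq> 2 ^ l - 1" "o' = Dec \<longrightarrow> val n0 \<noteq> 0" "vp l (val n) ps v'"
    using Cons.prems p by auto
  note IH = Cons.IH[OF h(6) h(1)]
  have A: "\<forall>x\<in>set (n0 # map snd (p # ps)). bitword l x" using IH Cons.prems p by auto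
  have B: "\<forall>i<length (p # ps). is_op (map fst (p # ps) ! i) \<and>
      val ((n0 # map snd (p # ps)) ! Suc i) = op_val (map fst (p # ps) ! i) (val ((n0 # map snd (p # ps)) ! i)) \<and>
      (map fst (p # ps) ! i = Inc \<longrightarrow> (n0 # map snd (p # ps)) ! i \<noteq> replicate l One) \<and>
      (map fst (p # ps) ! i = Dec \<longrightarrow> (n0 # map snd (p # ps)) ! i \<noteq> replicate l Zero)"
  proof (intro allI impI)
    fix i assume i: "i < length (p # ps)"
    show "is_op (map fst (p # ps) ! i) \<and>
      val ((n0 # map snd (p # ps)) ! Suc i) = op_val (map fst (p # ps) ! i) (val ((n0 # map snd (p # ps)) ! i)) \<and>
      (map fst (p # ps) ! i = Inc \<longrightarrow> (n0 # map snd (p # ps)) ! i \<noteq> replicate l One) \<and>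
      (map fst (p # ps) ! i = Dec \<longrightarrow> (n0 # map snd (p # ps)) ! i \<noteq> replicate l Zero)"
    proof (cases i)
      case 0 then show ?thesis using h p by (auto simp: val_ones val_zeros)
    next
      case (Suc j)
      then have "j < length ps" using i by simp
      then show ?thesis using IH Suc p by auto
    qed
  qed
  have C: "val (last (n0 # map snd (p # ps))) = v'" using IH p by simp
  show ?case using A B C by blast
qed

lemma vp_Lprime:
  assumes "vp l 0 ps 0"
  shows "replicate l Zero @ flat ps \<in> Lprime l"
proof -
  let ?n0 = "replicate l (Zero :: 'a letter)"
  have b0: "bitword l ?n0" by (auto simp: bitword_def)
  note P = vp_props[of l ?n0 ps 0, unfolded val_zeros, OF assms b0]
  let ?ns = "?n0 # map snd ps" and ?os = "map fst ps"
  have last: "?ns ! length ?os = last ?ns" by (simp add: last_conv_nth)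
  have "last ?ns \<in> set ?ns" by (rule last_in_set) simp
  then have "bitword l (last ?ns)" using P by blast
  then have lastz: "last ?ns = replicate l Zero"
    using P zeros_val[of l "last ?ns"] by blast
  have w: "?ns ! 0 @ concat (map (\<lambda>i. ?os ! i # ?ns ! Suc i) [0..<length ?os]) =
        replicate l Zero @ flat ps"
  proof -
    have "map (\<lambda>i. ?os ! i # ?ns ! Suc i) [0..<length ?os] = map (\<lambda>i. (\<lambda>(o', n). o' # n) (ps ! i)) [0..<length ps]"
      by (rule map_cong) (auto split: prod.splits)
    also have "\<dots> = map (\<lambda>(o', n). o' # n) ps" by (rule map_idx)
    finally show ?thesis by (simp add: flat_def)
  qed
  show ?thesis unfolding Lprime_def
    apply (rule CollectI)
    apply (rule exI[of _ ?ns])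
    apply (rule exI[of _ ?os])
    using P last lastz w by auto
qed



fun pairsB :: "nat \<Rightarrow> nat \<Rightarrow> nat \<Rightarrow> 'g list \<Rightarrow> ('g letter \<times> 'g letter list) list" where
  "pairsB l 0 d gs = [(G (gs ! 0), bin l d), (G (gs ! 1), bin l d)]"
| "pairsB l (Suc h) d gs = (Inc, bin l (d + 1)) # pairsB l h (d + 1) (take (2 ^ Suc h) gs) @
     [(Dec, bin l d), (Inc, bin l (d + 1))] @ pairsB l h (d + 1) (drop (2 ^ Suc h) gs) @ [(Dec, bin l d)]"

lemma proj_bin[simp]: "proj (bin l d) = []"
  by (rule proj_bits[OF bin_set])

lemma proj_pairsB: "length gs = 2 ^ Suc h \<Longrightarrow> proj (flat (pairsB l h d gs)) = gs"
proof (induction h arbitrary: d gs)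
  case 0
  then obtain x y where "gs = [x, y]"
    by (metis One_nat_def Suc_1 length_0_conv length_Suc_conv power_one_right)
  then show ?case by (simp add: proj_Cons)
next
  case (Suc h)
  have "length (take (2 ^ Suc h) gs) = 2 ^ Suc h" "length (drop (2 ^ Suc h) gs) = 2 ^ Suc h"
    using Suc.prems by auto
  then show ?case using Suc.IH by (simp add: proj_Cons)
qed

lemma vp_B: "d + h = N \<Longrightarrow> N = 2 ^ l - 1 \<Longrightarrow> vp l d (pairsB l h d gs) d"
proof (induction h arbitrary: d gs)
  case 0
  have "d < 2 ^ l" using 0 by simp
  then show ?case using 0 bin_set[of l d] by (auto simp: bin_val bitword_def is_op_def)
next
  case (Suc h)
  have lt: "d + 1 < 2 ^ l" "d < 2 ^ l" "d \<noteq> 2 ^ l - 1" using Suc.prems by auto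
  have bw: "bitword l (bin l (d + 1))" "bitword l (bin l d)"
    using bin_set by (auto simp: bitword_def)
  have s1: "vp l d [(Inc, bin l (d + 1))] (d + 1)" using lt bw by (simp add: bin_val is_op_def)
  have s2: "vp l (d + 1) [(Dec, bin l d), (Inc, bin l (d + 1))] (d + 1)"
    using lt bw by (simp add: bin_val is_op_def)
  have s3: "vp l (d + 1) [(Dec, bin l d)] d" using lt bw by (simp add: bin_val is_op_def)
  have i1: "vp l (d + 1) (pairsB l h (d + 1) (take (2 ^ Suc h) gs)) (d + 1)"
    using Suc.IH Suc.prems by simp
  have i2: "vp l (d + 1) (pairsB l h (d + 1) (drop (2 ^ Suc h) gs)) (d + 1)"
    using Suc.IH Suc.prems by simp
  have "vp l d ([(Inc, bin l (d + 1))] @ pairsB l h (d + 1) (take (2 ^ Suc h) gs) @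
     [(Dec, bin l d), (Inc, bin l (d + 1))] @ pairsB l h (d + 1) (drop (2 ^ Suc h) gs) @ [(Dec, bin l d)]) d"
    by (intro vp_app[OF s1] vp_app[OF i1] vp_app[OF s2] vp_app[OF i2] s3)
  then show ?case by (simp del: vp.simps(2))
qed

lemma run_D: "set n \<subseteq> {Zero, One} \<Longrightarrow> run (Apda :: (nat, nat, 'g letter) pda) 1 s n 1 s"
proof (induction n)
  case Nil show ?case by (rule run_nil)
next
  case (Cons x n)
  then have "(1, Some x, Nop, 1) \<in> delta (Apda :: (nat, nat, 'g letter) pda)" by (auto simp: deltaA_def)
  then show ?case using Cons by (auto intro: run_letter)
qed

lemma run_Y: "set n \<subseteq> {Zero, One} \<Longrightarrow> run (Apda :: (nat, nat, 'g letter) pda) 2 s n 2 s"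
proof (induction n)
  case Nil show ?case by (rule run_nil)
next
  case (Cons x n)
  then have "(2, Some x, Nop, 2) \<in> delta (Apda :: (nat, nat, 'g letter) pda)" by (auto simp: deltaA_def)
  then show ?case using Cons by (auto intro: run_letter)
qed

lemma run_X: "set n \<subseteq> {One} \<Longrightarrow> run (Apda :: (nat, nat, 'g letter) pda) 0 s n 0 s"
proof (induction n)
  case Nil show ?case by (rule run_nil)
next
  case (Cons x n)
  then have "(0, Some x, Nop, 0) \<in> delta (Apda :: (nat, nat, 'g letter) pda)" by (auto simp: deltaA_def)
  then show ?case using Cons by (auto intro: run_letter)
qed

lemma run_step: "run A q st u q1 st1 \<Longrightarrow> (q1, Some a, op, q2) \<in> delta A \<Longrightarrow> apply_op op st1 = Some st2
   \<Longrightarrow> run A q2 st2 v q3 st3 \<Longrightarrow> run A q st (u @ a # v) q3 st3"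
  by (rule run_app) (auto intro: run_letter)

lemma run_B: "d + h = N \<Longrightarrow> N = 2 ^ l - 1 \<Longrightarrow>
  run (Apda :: (nat, nat, 'g letter) pda) 0 s (bin l d @ flat (pairsB l h d gs)) 2 s"
proof (induction h arbitrary: d gs s)
  case 0
  then have d: "bin l d = replicate l (One :: 'g letter)" using bin_max by simp
  have so: "set (bin l d :: 'g letter list) \<subseteq> {One}" using d by auto
  have X: "\<And>s. run (Apda :: (nat, nat, 'g letter) pda) 0 s (bin l d) 0 s" using run_X[OF so] by blast
  have Y: "run (Apda :: (nat, nat, 'g letter) pda) 2 s (bin l d) 2 s" using run_Y bin_set by blast
  have t1: "(0, Some (G (gs ! 0)), Push 1, 0) \<in> delta (Apda :: (nat, nat, 'g letter) pda)"
    by (simp add: deltaA_def)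
  have t2: "(0, Some (G (gs ! 1)), Pop 1, 2) \<in> delta (Apda :: (nat, nat, 'g letter) pda)"
    by (simp add: deltaA_def)
  have "run (Apda :: (nat, nat, 'g letter) pda) 0 s (bin l d @ G (gs ! 0) # (bin l d @ G (gs ! 1) # bin l d)) 2 s"
  proof -
    have p1: "apply_op (Push (1::nat)) s = Some (1 # s)" by simp
    have p2: "apply_op (Pop (1::nat)) (1 # s) = Some s" by simp
    show ?thesis by (rule run_step[OF X t1 p1 run_step[OF X t2 p2 Y]])
  qed
  then show ?case by simp
next
  case (Suc h)
  let ?A = "Apda :: (nat, nat, 'g letter) pda"
  let ?P1 = "pairsB l h (d + 1) (take (2 ^ Suc h) gs)"
  let ?P2 = "pairsB l h (d + 1) (drop (2 ^ Suc h) gs)"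
  have I1: "run ?A 0 (0 # 1 # s) (bin l (d + 1) @ flat ?P1) 2 (0 # 1 # s)" using Suc by simp
  have I2: "run ?A 0 (0 # s) (bin l (d + 1) @ flat ?P2) 2 (0 # s)" using Suc by simp
  have tI: "(1, Some Inc, Push 0, 0) \<in> delta ?A" by (simp add: deltaA_def)
  have tD: "(2, Some Dec, Pop 0, 2) \<in> delta ?A" by (simp add: deltaA_def)
  have eX: "(0, None, Push 1, 1) \<in> delta ?A" by (simp add: deltaA_def)
  have eY: "(2, None, Pop 1, 1) \<in> delta ?A" by (simp add: deltaA_def)
  have D: "\<And>s. run ?A 1 s (bin l d) 1 s" using run_D bin_set by blast
  have Y: "\<And>s. run ?A 2 s (bin l d) 2 s" using run_Y bin_set by blast
  have r4: "run ?A 2 (0 # s) (Dec # bin l d) 2 s"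
    using run_step[OF run_nil tD _ Y, of "0 # s" s] by simp
  have r3: "run ?A 2 (1 # s) (bin l d @ Inc # (bin l (d + 1) @ flat ?P2 @ Dec # bin l d)) 2 s"
  proof -
    have a: "run ?A 2 (1 # s) (bin l d) 1 s"
      using run_app[OF Y run_eps[OF eY _ run_nil]] by simp
    show ?thesis using run_step[OF a tI _ run_app[OF I2 r4]] by simp
  qed
  have r2: "run ?A 2 (0 # 1 # s) (Dec # bin l d @ Inc # (bin l (d + 1) @ flat ?P2 @ Dec # bin l d)) 2 s"
    using run_step[OF run_nil tD _ r3, of "0 # 1 # s"] by simp
  have r1: "run ?A 0 s (bin l d @ Inc # (bin l (d + 1) @ flat ?P1 @ Dec # bin l d @ Inc #
       (bin l (d + 1) @ flat ?P2 @ Dec # bin l d))) 2 s"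
  proof -
    have a: "run ?A 0 s (bin l d) 1 (1 # s)" using run_eps[OF eX _ D] by simp
    show ?thesis using run_step[OF a tI _ run_app[OF I1 r2]] by simp
  qed
  then show ?case by simp
qed



theorem claim4p9:
  fixes l :: nat
  shows "\<exists>A :: (nat, nat, 'g::finite letter) pda.
           pda_wf A \<and> card (states A) = 3 \<and> card (stack_alph A) = 2 \<and>
           proj ` (lang A \<inter> Lprime l) = {u :: 'g list. length u = 2 ^ (2 ^ l)}"
proof (intro exI[of _ "Apda :: (nat, nat, 'g letter) pda"] conjI)
  show "pda_wf (Apda :: (nat, nat, 'g letter) pda)" by (rule Apda_wf)
  show "card (states (Apda :: (nat, nat, 'g letter) pda)) = 3" by simp
  show "card (stack_alph (Apda :: (nat, nat, 'g letter) pda)) = 2" by simp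
  define N where "N = 2 ^ l - (1::nat)"
  have N1: "Suc N = 2 ^ l" unfolding N_def by simp
  show "proj ` (lang (Apda :: (nat, nat, 'g letter) pda) \<inter> Lprime l) = {u :: 'g list. length u = 2 ^ (2 ^ l)}"
  proof (intro equalityI subsetI)
    fix x assume "x \<in> proj ` (lang (Apda :: (nat, nat, 'g letter) pda) \<inter> Lprime l)"
    then obtain w where x: "x = proj w" and wl: "w \<in> lang (Apda :: (nat, nat, 'g letter) pda)"
      and wL: "w \<in> Lprime l" by blast
    have r: "run (Apda :: (nat, nat, 'g letter) pda) 0 [] w 2 []" using wl by (simp add: lang_def)
    obtain ns os where lens: "length ns = Suc (length os)"
      and w: "w = ns ! 0 @ concat (map (\<lambda>i. os ! i # ns ! Suc i) [0..<length os])"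
      and bw: "\<forall>n \<in> set ns. bitword l n" and n0: "ns ! 0 = replicate l Zero"
      and cond: "\<forall>i < length os. is_op (os ! i) \<and> val (ns ! Suc i) = op_val (os ! i) (val (ns ! i))"
      using wL unfolding Lprime_def by blast
    have v0: "val (ns ! 0) = 0" using n0 val_zeros by simp
    have g0: "Good N 0 [] (val (ns ! 0))" using v0 by (simp add: Good_def topok_def)
    have "Good N 0 [] (val (ns ! 0)) \<and> length (proj w) = Phi N 0 [] (val (ns ! 0))"
      using count_main[OF lens bw cond N_def, of 0 0 "[]"] r w g0 by simp
    then have "length (proj w) = 2 ^ Suc N" using v0 by (simp add: Phi_def topok_def)
    then show "x \<in> {u :: 'g list. length u = 2 ^ (2 ^ l)}" using x N1 by simp
  next
    fix u :: "'g list" assume "u \<in> {u :: 'g list. length u = 2 ^ (2 ^ l)}"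
    then have lu: "length u = 2 ^ Suc N" using N1 by simp
    let ?w = "replicate l Zero @ flat (pairsB l N 0 u)"
    have "set (replicate l (Zero :: 'g letter)) \<subseteq> {Zero, One}" by auto
    then have "proj (replicate l (Zero :: 'g letter)) = []" by (rule proj_bits)
    then have "proj ?w = u" using proj_pairsB[OF lu] by simp
    moreover have "?w \<in> Lprime l" using vp_Lprime vp_B[of 0 N N l u] N_def by simp
    moreover have "?w \<in> lang (Apda :: (nat, nat, 'g letter) pda)"
    proof -
      have rb: "run (Apda :: (nat, nat, 'g letter) pda) 0 [] (bin l 0 @ flat (pairsB l N 0 u)) 2 []"
        using run_B[of 0 N N l "[]" u] N_def by simp
      then have "run (Apda :: (nat, nat, 'g letter) pda) 0 [] ?w 2 []" by (simp only: bin_zero)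
      then show ?thesis by (simp add: lang_def)
    qed
    ultimately show "u \<in> proj ` (lang (Apda :: (nat, nat, 'g letter) pda) \<inter> Lprime l)"
      by (intro image_eqI[of u proj ?w]) auto
  qed
qed

end
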